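(* Let $\lambda_1\ge0$ and $\lambda_2=0$. Let $P_n$ be the monic orthogonal polynomials for $\langle f,g\rangle_F=\int_{\mathbb R}fg\,e^{-x^4}dx$, $k_n=\langle P_n,P_n\rangle_F$, and let $Q_n$ be the monic orthogonal polynomials for $\langle f,g\rangle_S=\int_{\mathbb R}fg\,e^{-x^4}dx+\lambda_1 f(0)g(0)$, $\widehat k_n=\langle Q_n,Q_n\rangle_S$. Then $Q_0(x)=1$, $Q_1(x)=x$, and for all $n\ge1$, $$xP_n(x)=Q_{n+1}(x)+a_nQ_{n-1}(x),\qquad xQ_n(x)=P_{n+1}(x)+b_nP_{n-1}(x),$$ where $a_n=\dfrac{k_n}{\widehat k_{n-1}}$ and $b_n=\dfrac{\widehat k_n}{k_{n-1}}$.
   Context: All polynomials are real; "monic orthogonal polynomials" means $\deg P_n=\deg Q_n=n$ with leading coefficient $1$ and orthogonality to all polynomials of lower degree in the respective inner product. *)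

theory Defs
  imports "HOL-Analysis.Analysis" "HOL-Computational_Algebra.Polynomial"
begin

definition inner_F :: "real poly \<Rightarrow> real poly \<Rightarrow> real" where
  "inner_F f g = (\<integral>x. poly f x * poly g x * exp (- (x ^ 4)) \<partial>lborel)"

definition inner_S :: "real \<Rightarrow> real poly \<Rightarrow> real poly \<Rightarrow> real" where
  "inner_S lam1 f g = inner_F f g + lam1 * poly f 0 * poly g 0"

definition monic_OPS :: "(real poly \<Rightarrow> real poly \<Rightarrow> real) \<Rightarrow> (nat \<Rightarrow> real poly) \<Rightarrow> bool" where
  "monic_OPS ip p \<longleftrightarrow>
     (\<forall>n. degree (p n) = n \<and> lead_coeff (p n) = 1 \<and>
          (\<forall>q. degree q < n \<longrightarrow> ip (p n) q = 0))"

end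

theory Submission
  imports Defs "HOL-Probability.Probability"
begin

definition L :: "real poly \<Rightarrow> real" where
  "L h = (\<integral>x. poly h x * exp (- (x ^ 4)) \<partial>lborel)"

lemma integ_mono: "integrable lborel (\<lambda>x::real. x ^ k * exp (- (x ^ 4)))"
proof (rule Bochner_Integration.integrable_bound[where f="\<lambda>x. (exp 1 * sqrt (2*pi)) * (std_normal_density x * \<bar>x\<bar>^k)"])
  show "integrable lborel (\<lambda>x. (exp 1 * sqrt (2*pi)) * (std_normal_density x * \<bar>x\<bar>^k))"
    using integrable_std_normal_moment_abs[of k] by simp
  show "(\<lambda>x::real. x ^ k * exp (- (x ^ 4))) \<in> borel_measurable lborel" by measurable
  show "AE x in lborel. norm (x ^ k * exp (- (x ^ 4))) \<le> norm ((exp 1 * sqrt (2*pi)) * (std_normal_density x * \<bar>x\<bar>^k))"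
  proof (rule AE_I2)
    fix x :: real
    have "- (x^4) \<le> 1 + (- x\<^sup>2 / 2)"
      using sum_squares_ge_zero[of "x^2 - 1/4" 0] by (simp add: power2_eq_square power4_eq_xxxx algebra_simps) 
    then have e: "exp (- (x^4)) \<le> exp 1 * exp (- x\<^sup>2 / 2)" by (simp add: exp_add[symmetric])
    have "norm (x ^ k * exp (- (x ^ 4))) = \<bar>x\<bar>^k * exp (- (x^4))" by (simp add: abs_mult power_abs)
    also have "\<dots> \<le> \<bar>x\<bar>^k * (exp 1 * exp (- x\<^sup>2 / 2))" by (rule mult_left_mono[OF e]) simp
    also have "\<dots> = norm ((exp 1 * sqrt (2*pi)) * (std_normal_density x * \<bar>x\<bar>^k))"
      by (simp add: std_normal_density_def abs_mult)
    finally show "norm (x ^ k * exp (- (x ^ 4))) \<le> norm ((exp 1 * sqrt (2*pi)) * (std_normal_density x * \<bar>x\<bar>^k))" .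
  qed
qed

lemma integ_poly: "integrable lborel (\<lambda>x::real. poly h x * exp (- (x ^ 4)))"
proof -
  have eq: "(\<lambda>x::real. poly h x * exp (- (x ^ 4))) = (\<lambda>x. \<Sum>i\<le>degree h. coeff h i * (x ^ i * exp (- (x ^ 4))))"
    by (simp add: poly_altdef sum_distrib_right mult.assoc)
  show ?thesis unfolding eq
    by (rule Bochner_Integration.integrable_sum, rule integrable_mult_right, rule integ_mono)
qed

lemma L_add: "L (a + b) = L a + L b"
  unfolding L_def by (simp add: distrib_right integ_poly)

lemma L_smult: "L (smult c a) = c * L a"
  unfolding L_def by (simp add: mult.assoc)

lemma L_even: "L (a \<circ>\<^sub>p [:0, -1:]) = L a"
  unfolding L_def
  by (subst (2) lborel_integral_real_affine[where c="-1" and t=0]) (auto simp: poly_pcompose)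

lemma L_nonneg: "L (f * f) \<ge> 0"
  unfolding L_def by (intro integral_nonneg_AE AE_I2) auto

lemma L_pd: assumes "L (f * f) = 0" shows "f = 0"
proof (rule ccontr)
  assume f: "f \<noteq> 0"
  have "AE x in lborel. poly (f*f) x * exp (- (x ^ 4)) = 0"
    using assms integral_nonneg_eq_0_iff_AE[OF integ_poly[of "f*f"]] unfolding L_def by auto
  then have a: "AE x in lborel. x \<in> {x. poly f x = 0}" by (auto elim!: AE_mp)
  have b: "AE x in lborel. x \<notin> {x. poly f x = 0}"
    using finite_imp_null_set_lborel[OF poly_roots_finite[OF f]] AE_not_in by blast
  have "AE x::real in lborel. False" using AE_conjI[OF a b] by simp
  then have "ae_filter (lborel::real measure) = bot" by (simp add: eventually_False)
  then show False by (simp add: ae_filter_eq_bot_iff)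
qed



definition mops :: "(real poly \<Rightarrow> real) \<Rightarrow> (nat \<Rightarrow> real poly) \<Rightarrow> bool" where
  "mops F p \<longleftrightarrow> (\<forall>n. degree (p n) = n \<and> lead_coeff (p n) = 1 \<and> (\<forall>q. degree q < n \<longrightarrow> F (p n * q) = 0))"

lemma red:
  fixes a b :: "real poly"
  assumes "degree a \<le> n" "degree b = n" "lead_coeff b = 1"
  shows "a - smult (coeff a n) b = 0 \<or> degree (a - smult (coeff a n) b) < n"
proof -
  let ?r = "a - smult (coeff a n) b"
  { assume nz: "?r \<noteq> 0"
  have le: "degree ?r \<le> n" using assms
    by (intro degree_diff_le) (auto intro: order.trans[OF degree_smult_le])
  have "coeff ?r n = 0" using assms by simp
  moreover have "coeff ?r (degree ?r) \<noteq> 0" using nz leading_coeff_0_iff by blast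
  ultimately have "degree ?r \<noteq> n" by metis
  with le have "degree ?r < n" by simp }
  then show ?thesis by blast
qed

lemma neg1sq: "(-1::real)^n * (-1)^n = 1"
  by (simp add: power_mult_distrib[symmetric])

abbreviation mm :: "real poly" where "mm \<equiv> [:0, -1:]"

locale lfun =
  fixes F :: "real poly \<Rightarrow> real"
  assumes add: "F (a + b) = F a + F b"
    and sm: "F (smult c a) = c * F a"
    and ev: "F (a \<circ>\<^sub>p mm) = F a"
    and pd: "F (f * f) = 0 \<Longrightarrow> f = 0"
begin

lemma zero[simp]: "F 0 = 0"
  using sm[of 0 0] by simp

lemma minus: "F (- a) = - F a"
  using sm[of "-1" a] by simp

lemma diff: "F (a - b) = F a - F b"
  using add[of a "-b"] minus[of b] by simp

lemma odd: assumes "h \<circ>\<^sub>p mm = - h" shows "F h = 0"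
  using ev[of h] assms minus[of h] by simp

context
  fixes p assumes mo: "mops F p"
begin

lemma deg: "degree (p n) = n" using mo unfolding mops_def by blast
lemma lc: "lead_coeff (p n) = 1" using mo unfolding mops_def by blast
lemma nz: "p n \<noteq> 0" using lc[of n] by auto

lemma orth: "q = 0 \<or> degree q < n \<Longrightarrow> F (p n * q) = 0"
  using mo unfolding mops_def by auto

lemma uniq:
  assumes "degree r = n" "lead_coeff r = 1" "\<And>q. degree q < n \<Longrightarrow> F (r * q) = 0"
  shows "r = p n"
proof -
  define D where "D = r - p n"
  have "D = 0 \<or> degree D < n"
    using red[of r n "p n"] assms deg[of n] lc[of n] unfolding D_def by simp
  then show ?thesis
  proof
    assume "degree D < n"
    then have "F (D * D) = 0"
      using assms(3)[of D] orth[of D n] unfolding D_def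
      by (simp add: left_diff_distrib diff)
    then have "D = 0" by (rule pd)
    then show ?thesis unfolding D_def by simp
  qed (simp add: D_def)
qed

lemma parity: "p n \<circ>\<^sub>p mm = smult ((-1)^n) (p n)"
proof -
  define r where "r = smult ((-1)^n) (p n \<circ>\<^sub>p mm)"
  have dr: "degree r = n" unfolding r_def by (simp add: degree_pcompose deg)
  have c1: "coeff (p n) n = 1" using lc[of n] deg[of n] by simp
  have lr: "lead_coeff r = 1" unfolding r_def
    by (simp add: lead_coeff_smult lead_coeff_comp deg c1 neg1sq)
  have "F (r * q) = 0" if "degree q < n" for q
  proof -
    have e: "(p n \<circ>\<^sub>p mm) * q = (p n * (q \<circ>\<^sub>p mm)) \<circ>\<^sub>p mm"
      by (rule poly_eq_poly_eq_iff[THEN iffD1]) (simp add: poly_pcompose fun_eq_iff)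
    have "F (r * q) = (-1)^n * F ((p n * (q \<circ>\<^sub>p mm)) \<circ>\<^sub>p mm)"
      unfolding r_def by (simp add: sm e)
    also have "\<dots> = 0" using ev orth[of "q \<circ>\<^sub>p mm" n] that by (simp add: degree_pcompose)
    finally show ?thesis .
  qed
  then have "r = p n" using uniq dr lr by blast
  then have "smult ((-1)^n) r = smult ((-1)^n) (p n)" by simp
  then show ?thesis unfolding r_def by (simp add: neg1sq)
qed

lemma p0: "p 0 = 1"
proof (rule poly_eqI)
  fix i show "coeff (p 0) i = coeff 1 i"
    using lc[of 0] deg[of 0] by (cases i) (auto simp: coeff_eq_0)
qed

lemma parity_poly: "poly (p n) (-x) = (-1)^n * poly (p n) x"
  using arg_cong[OF parity[of n], of "\<lambda>q. poly q x"] by (simp add: poly_pcompose)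

lemma p1: "p 1 = [:0, 1:]"
proof (rule poly_eqI)
  fix i
  have "poly (p 1) (-0) = (-1)^1 * poly (p 1) 0" by (rule parity_poly)
  then have c0: "coeff (p 1) 0 = 0" by (simp add: poly_0_coeff_0)
  show "coeff (p 1) i = coeff [:0, 1:] i"
    using lc[of 1] deg[of 1] c0 by (cases i) (auto simp: coeff_eq_0 coeff_pCons split: nat.split)
qed

end
end

locale two_forms = A: lfun A + B: lfun B for A B +
  assumes AB: "B ([:0,1:] * h) = A ([:0,1:] * h)"
begin

lemma rec:
  assumes P: "mops A P" and Q: "mops B Q" and n: "n \<ge> 1"
  shows "[:0,1:] * P n = Q (n + 1) + smult (A (P n * P n) / B (Q (n - 1) * Q (n - 1))) (Q (n - 1))"
proof -
  define X :: "real poly" where "X = [:0,1:]"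
  have Xm: "X * h = pCons 0 h" for h unfolding X_def by simp
  define a where "a = A (P n * P n) / B (Q (n - 1) * Q (n - 1))"
  define R where "R = X * P n - Q (n+1) - smult a (Q (n - 1))"
  have degXP: "degree (X * P n) = n + 1" using A.nz[OF P] A.deg[OF P] by (simp add: Xm)
  have cXP: "coeff (X * P n) (n+1) = 1" using A.lc[OF P, of n] A.deg[OF P, of n] by (simp add: Xm)
  have D1: "X * P n - Q (n+1) = 0 \<or> degree (X * P n - Q (n+1)) < n + 1"
    using red[of "X * P n" "n+1" "Q (n+1)"] degXP cXP B.deg[OF Q] B.lc[OF Q] by simp
  have degD1: "degree (X * P n - Q (n+1)) \<le> n" using D1 by auto
  have degR: "degree R \<le> n" unfolding R_def
    using degD1 B.deg[OF Q, of "n-1"] n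
    by (intro degree_diff_le[OF degD1]) (auto intro: order.trans[OF degree_smult_le])
  define c where "c = coeff R n"
  define R1 where "R1 = R - smult c (Q n)"
  have R1: "R1 = 0 \<or> degree R1 < n" unfolding R1_def c_def
    using red[of R n "Q n"] degR B.deg[OF Q] B.lc[OF Q] by simp
  then have degR1: "degree R1 \<le> n - 1" by auto
  define c' where "c' = coeff R1 (n-1)"
  define R2 where "R2 = R1 - smult c' (Q (n-1))"
  have R2: "R2 = 0 \<or> degree R2 < n - 1" unfolding R2_def c'_def
    using red[of R1 "n-1" "Q (n-1)"] degR1 B.deg[OF Q] B.lc[OF Q] by simp
  have Rdec: "R = smult c (Q n) + smult c' (Q (n-1)) + R2"
    unfolding R2_def R1_def by simp
  have lin: "B (R * q) = B (X * (P n * q)) - B (Q (n+1) * q) - a * B (Q (n-1) * q)" for q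
    unfolding R_def by (simp add: left_diff_distrib B.diff B.sm mult.assoc)
  have XPq: "B (X * (P n * q)) = A (P n * (X * q))" for q
    using AB[of "P n * q"] unfolding X_def by (simp add: mult.left_commute)
  have o1: "B (R * R2) = 0"
  proof -
    have "X * R2 = 0 \<or> degree (X * R2) < n"
      using R2 n by (auto simp: Xm)
    then have "A (P n * (X * R2)) = 0" by (rule A.orth[OF P])
    moreover have "B (Q (n+1) * R2) = 0" using R2 by (intro B.orth[OF Q]) auto
    moreover have "B (Q (n-1) * R2) = 0" using R2 by (intro B.orth[OF Q])
    ultimately show ?thesis by (simp add: lin XPq)
  qed
  have BQ: "B (Q (n-1) * Q (n-1)) \<noteq> 0" using B.pd B.nz[OF Q] by blast
  have o2: "B (R * Q (n-1)) = 0"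
  proof -
    define E where "E = X * Q (n-1) - P n"
    have dXQ: "degree (X * Q (n-1)) = n" using B.nz[OF Q] B.deg[OF Q] n by (simp add: Xm)
    have cXQ: "coeff (X * Q (n-1)) n = 1" using B.lc[OF Q, of "n-1"] B.deg[OF Q, of "n-1"] n
      by (cases n) (simp_all add: Xm)
    have "E = 0 \<or> degree E < n" unfolding E_def
      using red[of "X * Q (n-1)" n "P n"] dXQ cXQ A.deg[OF P] A.lc[OF P] by simp
    then have "A (P n * E) = 0" by (rule A.orth[OF P])
    then have "A (P n * (X * Q (n-1))) = A (P n * P n)"
      unfolding E_def by (simp add: right_diff_distrib A.diff)
    moreover have "B (Q (n+1) * Q (n-1)) = 0" using B.deg[OF Q, of "n-1"] n
      by (intro B.orth[OF Q]) auto
    ultimately show ?thesis using BQ by (simp add: lin XPq a_def)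
  qed
  have o3: "B (R * Q n) = 0"
  proof -
    have "(X * P n * Q n) \<circ>\<^sub>p mm = - (X * P n * Q n)"
    proof (rule poly_eq_poly_eq_iff[THEN iffD1], rule ext)
      fix x
      have "poly ((X * P n * Q n) \<circ>\<^sub>p mm) x = (-x) * ((-1)^n * poly (P n) x) * ((-1)^n * poly (Q n) x)"
        by (simp add: poly_pcompose A.parity_poly[OF P] B.parity_poly[OF Q] X_def)
      also have "\<dots> = - (x * poly (P n) x * poly (Q n) x) * ((-1)^n * (-1)^n)" by (simp add: algebra_simps)
      also have "\<dots> = poly (- (X * P n * Q n)) x" by (simp add: neg1sq X_def)
      finally show "poly ((X * P n * Q n) \<circ>\<^sub>p mm) x = poly (- (X * P n * Q n)) x" .
    qed
    then have "A (X * (P n * Q n)) = 0" using A.odd by (simp add: mult.assoc)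
    moreover have "A (P n * (X * Q n)) = A (X * (P n * Q n))" by (simp add: mult.left_commute)
    moreover have "B (Q (n+1) * Q n) = 0" using B.deg[OF Q, of n] by (intro B.orth[OF Q]) auto
    moreover have "B (Q (n-1) * Q n) = 0" using B.orth[OF Q, of "Q (n-1)" n] B.deg[OF Q, of "n-1"] n
      by (simp add: mult.commute)
    ultimately show ?thesis by (simp add: lin XPq)
  qed
  have "R * R = smult c (R * Q n) + smult c' (R * Q (n-1)) + R * R2"
    by (subst (2) Rdec) (simp add: algebra_simps)
  then have "B (R * R) = 0" using o1 o2 o3 by (simp add: B.add B.sm)
  then have "R = 0" by (rule B.pd)
  then show ?thesis unfolding R_def X_def a_def by (simp add: algebra_simps)
qed

end


definition Bf :: "real \<Rightarrow> real poly \<Rightarrow> real" where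
  "Bf lam1 h = L h + lam1 * poly h 0"

lemma inner_F_L: "inner_F = (\<lambda>f g. L (f * g))"
  by (simp add: fun_eq_iff inner_F_def L_def)

lemma inner_S_B: "inner_S lam1 = (\<lambda>f g. Bf lam1 (f * g))"
  by (simp add: fun_eq_iff inner_S_def inner_F_def L_def Bf_def)

lemma mops_eq: "monic_OPS (\<lambda>f g. F (f * g)) p = mops F p"
  unfolding monic_OPS_def mops_def by simp

lemma lfun_L: "lfun L"
  by unfold_locales (auto simp: L_add L_smult L_even intro: L_pd)

lemma lfun_B: assumes "lam1 \<ge> (0::real)" shows "lfun (Bf lam1)"
proof
  fix a b :: "real poly" and c show "Bf lam1 (a + b) = Bf lam1 a + Bf lam1 b"
    by (simp add: Bf_def L_add algebra_simps)
  show "Bf lam1 (smult c a) = c * Bf lam1 a" by (simp add: Bf_def L_smult algebra_simps)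
  show "Bf lam1 (a \<circ>\<^sub>p mm) = Bf lam1 a" by (simp add: Bf_def L_even poly_pcompose)
next
  fix f :: "real poly" assume h: "Bf lam1 (f * f) = 0"
  have "0 \<le> lam1 * (poly f 0 * poly f 0)" using assms by simp
  then have "L (f * f) = 0" using h L_nonneg[of f] by (simp add: Bf_def)
  then show "f = 0" by (rule L_pd)
qed

theorem mainTheorem2:
  fixes lam1 :: real and P Q :: "nat \<Rightarrow> real poly"
  assumes "lam1 \<ge> 0"
    and "monic_OPS inner_F P"
    and "monic_OPS (inner_S lam1) Q"
  shows "Q 0 = 1 \<and> Q 1 = [:0, 1:] \<and>
    (\<forall>n\<ge>1.
       [:0, 1:] * P n = Q (n + 1)
          + smult (inner_F (P n) (P n) / inner_S lam1 (Q (n - 1)) (Q (n - 1))) (Q (n - 1))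
     \<and> [:0, 1:] * Q n = P (n + 1)
          + smult (inner_S lam1 (Q n) (Q n) / inner_F (P (n - 1)) (P (n - 1))) (P (n - 1)))"
proof -
  have P: "mops L P" using assms(2) unfolding inner_F_L mops_eq .
  have Q: "mops (Bf lam1) Q" using assms(3) unfolding inner_S_B mops_eq .
  interpret LL: lfun L by (rule lfun_L)
  interpret BB: lfun "Bf lam1" by (rule lfun_B[OF assms(1)])
  interpret T1: two_forms L "Bf lam1"
    by unfold_locales (simp add: Bf_def)
  interpret T2: two_forms "Bf lam1" L
    by unfold_locales (simp add: Bf_def)
  show ?thesis
    using BB.p0[OF Q] BB.p1[OF Q] T1.rec[OF P Q] T2.rec[OF Q P]
    unfolding inner_F_L inner_S_B by blast
qed

end
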